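(* Let $\lambda_1,\lambda_2$ be two distinct lines in $\mathbb{R}^2$ given by $\Lambda_i=0$, where $\Lambda_i=\alpha_i x+\beta_i y+\gamma_i$ with real coefficients and with $\alpha_i\neq0$ and $\beta_i\neq0$ for $i=1,2$. Then the bivariate cubic polynomial $f(x,y)=xy\Lambda_1+\Lambda_2$ is irreducible. *)

theory Defs
  imports "HOL-Computational_Algebra.Polynomial_Factorial"
begin

text \<open>Bivariate real polynomials R[x,y] are represented as R[x][y], i.e. the type
  real poly poly: polynomials in y whose coefficients are polynomials in x.\<close>

definition var_x :: "real poly poly" where
  "var_x = [:[:0, 1:]:]"

definition var_y :: "real poly poly" where
  "var_y = [:0, 1:]"

definition lin_form :: "real \<Rightarrow> real \<Rightarrow> real \<Rightarrow> real poly poly" where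
  "lin_form a b c = [:[:c:]:] + [:[:a:]:] * var_x + [:[:b:]:] * var_y"

definition line_set :: "real \<Rightarrow> real \<Rightarrow> real \<Rightarrow> (real \<times> real) set" where
  "line_set a b c = {(x, y). a * x + b * y + c = 0}"

end

theory Submission
  imports Defs
begin

lemma core:
  fixes p q r s :: "real poly"
  assumes pr: "p*r = [:0,b1:]" and qs: "q*s = [:c2,a2:]" and m: "p*s + q*r = [:b2,c1,a1:]"
    and dp: "degree p = 0" and "a1\<noteq>0" "a2\<noteq>0" "b1\<noteq>0" "b2\<noteq>0"
  shows "line_set a1 b1 c1 = line_set a2 b2 c2"
proof -
  obtain k where pk: "p = [:k:]" using dp degree0_coeffs by blast
  have k0: "k \<noteq> 0" using pr pk \<open>b1\<noteq>0\<close> by auto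
  have "smult k r = [:0,b1:]" using pr pk by simp
  hence r: "r = smult (1/k) [:0,b1:]" using k0 by (metis smult_smult smult_1_left divide_self_if mult.commute times_divide_eq_left mult_1)
  have "q \<noteq> 0" "s \<noteq> 0" using qs \<open>a2\<noteq>0\<close> by auto
  hence dqs: "degree q + degree s = 1" using qs degree_mult_eq[of q s] \<open>a2\<noteq>0\<close> by simp
  show ?thesis
  proof (cases "degree q = 0")
    case True
    then obtain m0 where "q = [:m0:]" using degree0_coeffs by blast
    hence "p*s + q*r = smult k s + smult m0 r" using pk by simp
    moreover have "degree (smult k s + smult m0 r) \<le> 1"
      using dqs True r by (intro degree_add_le) (auto intro: order.trans[OF degree_smult_le])
    ultimately have "degree [:b2,c1,a1:] \<le> 1" using m by simp
    thus ?thesis using \<open>a1\<noteq>0\<close> by simp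
  next
    case False
    hence "degree s = 0" using dqs by simp
    then obtain sg where sg: "s = [:sg:]" using degree0_coeffs by blast
    have sg0: "sg \<noteq> 0" using qs sg \<open>a2\<noteq>0\<close> by auto
    have "smult sg q = [:c2,a2:]" using qs sg by (simp add: mult.commute)
    hence q: "q = smult (1/sg) [:c2,a2:]" using sg0 by (metis smult_smult smult_1_left divide_self_if mult.commute times_divide_eq_left mult_1)
    have eqs: "k*sg = b2" "b1 * c2 / (k*sg) = c1" "b1*a2/(k*sg) = a1"
      using m unfolding pk sg q r using k0 sg0 by (auto simp: field_simps)
    show ?thesis unfolding line_set_def
    proof (intro set_eqI, clarsimp)
      fix x y :: real
      have "a1*x + b1*y + c1 = (b1/b2) * (a2*x+b2*y+c2)"
        using eqs \<open>b2\<noteq>0\<close> by (auto simp: field_simps)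
      thus "(a1*x + b1*y + c1 = 0) = (a2*x+b2*y+c2 = 0)" using \<open>b1\<noteq>0\<close> \<open>b2\<noteq>0\<close> by simp
    qed
  qed
qed

lemma const_factor:
  fixes g0 u v :: "real poly"
  assumes "g0 * u = [:0,b1:]" "g0 * v = [:b2,c1,a1:]" "b1 \<noteq> 0" "b2 \<noteq> 0"
  shows "is_unit g0"
proof -
  have g0: "g0 \<noteq> 0" "u \<noteq> 0" using assms(1,3) by auto
  hence d: "degree g0 + degree u = 1" using degree_mult_eq[of g0 u] assms(1,3) by simp
  show ?thesis
  proof (cases "degree g0 = 0")
    case True thus ?thesis using g0 by (metis degree0_coeffs is_unit_triv pCons_eq_0_iff)
  next
    case False
    hence "degree u = 0" using d by simp
    then obtain u0 where u: "u = [:u0:]" using degree0_coeffs by blast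
    have "u0 \<noteq> 0" using g0 u by auto
    moreover have "poly g0 0 * poly u 0 = 0" using arg_cong[OF assms(1), of "\<lambda>p. poly p 0"] by simp
    ultimately have "poly g0 0 = 0" using u by simp
    hence "poly [:b2,c1,a1:] 0 = 0" using arg_cong[OF assms(2), of "\<lambda>p. poly p 0"] by simp
    thus ?thesis using assms(4) by simp
  qed
qed

lemma FF: "var_x * var_y * lin_form a1 b1 c1 + lin_form a2 b2 c2 = [: [:c2,a2:], [:b2,c1,a1:], [:0,b1:] :]"
  by (simp add: var_x_def var_y_def lin_form_def)

lemma deg0_unit:
  fixes g h :: "real poly poly"
  assumes "[: [:c2,a2:], [:b2,c1,a1:], [:0,b1:] :] = g * h" "degree g = 0" "b1 \<noteq> 0" "b2 \<noteq> 0"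
  shows "is_unit g"
proof -
  obtain g0 where g: "g = [:g0:]" using assms(2) degree0_coeffs by blast
  have e: "[: [:c2,a2:], [:b2,c1,a1:], [:0,b1:] :] = smult g0 h" using assms(1) g by simp
  have "g0 * coeff h 2 = [:0,b1:]" using arg_cong[OF e, of "\<lambda>p. coeff p 2"] by (simp add: numeral_2_eq_2)
  moreover have "g0 * coeff h 1 = [:b2,c1,a1:]" using arg_cong[OF e, of "\<lambda>p. coeff p 1"] by simp
  ultimately have "is_unit g0" using const_factor assms(3,4) by blast
  thus ?thesis using g is_unit_const_poly_iff by blast
qed

theorem lemma2:
  fixes \<alpha>1 \<beta>1 \<gamma>1 \<alpha>2 \<beta>2 \<gamma>2 :: real
  assumes "\<alpha>1 \<noteq> 0" "\<beta>1 \<noteq> 0" "\<alpha>2 \<noteq> 0" "\<beta>2 \<noteq> 0"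
    and "line_set \<alpha>1 \<beta>1 \<gamma>1 \<noteq> line_set \<alpha>2 \<beta>2 \<gamma>2"
  shows "irreducible (var_x * var_y * lin_form \<alpha>1 \<beta>1 \<gamma>1 + lin_form \<alpha>2 \<beta>2 \<gamma>2)"
  unfolding FF
proof (rule irreducibleI)
  let ?F = "[: [:\<gamma>2,\<alpha>2:], [:\<beta>2,\<gamma>1,\<alpha>1:], [:0,\<beta>1:] :]"
  show "?F \<noteq> 0" using assms(2) by simp
  show "\<not> is_unit ?F" unfolding is_unit_poly_iff using assms(2) by auto
  fix g h assume gh: "?F = g * h"
  have "g \<noteq> 0" "h \<noteq> 0" using gh assms(2) by auto
  hence d: "degree g + degree h = 2" using arg_cong[OF gh, of degree] degree_mult_eq[of g h] assms(2) by simp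
  show "is_unit g \<or> is_unit h"
  proof (cases "degree g = 0")
    case True thus ?thesis using deg0_unit[OF gh] assms by blast
  next
    case g0: False
    show ?thesis
    proof (cases "degree h = 0")
      case True thus ?thesis using deg0_unit[of _ _ _ _ _ _ h g] gh assms by (metis mult.commute)
    next
      case False
      with g0 d have "degree g = 1" "degree h = 1" by auto
      then obtain p q r s where g: "g = [:q,p:]" and h: "h = [:s,r:]"
        by (metis degree1_coeffs)
      have e: "?F = [: q*s, q*r + p*s, p*r :]" using gh unfolding g h by (simp add: algebra_simps)
      have pr: "p*r = [:0,\<beta>1:]" and qs: "q*s = [:\<gamma>2,\<alpha>2:]" and m: "p*s + q*r = [:\<beta>2,\<gamma>1,\<alpha>1:]"
        using e by (auto simp: add.commute)
      have "p \<noteq> 0" "r \<noteq> 0" using pr assms(2) by auto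
      hence "degree p + degree r = 1" using pr degree_mult_eq[of p r] assms(2) by simp
      hence "degree p = 0 \<or> degree r = 0" by auto
      moreover have "degree p = 0 \<Longrightarrow> False"
        using core[OF pr qs m _ assms(1,3,2,4)] assms(5) by blast
      moreover have "degree r = 0 \<Longrightarrow> False"
        using core[where p=r and r=p and q=s and s=q, OF _ _ _ _ assms(1,3,2,4)] pr qs m assms(5)
        by (metis add.commute mult.commute)
      ultimately show ?thesis by blast
    qed
  qed
qed

end
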